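(* For all integers $m,n\ge1$, every $\Psi:\mathbb{Z}^n\to\mathbb{R}_{>0}$ and each $\circ\in\{\ ,\ ',\ ''\}$, the set $\mathcal{W}^\circ_{n,m}(\Psi)=\bigcap_{k=1}^\infty\mathcal{A}^\circ_{n,m}(k^{-1}\Psi)$ has the same Lebesgue measure as $\mathcal{A}^\circ_{n,m}(\Psi)$.
   Context: Let $m,n\ge1$ be integers. Points $\mathbf{X}\in[0,1]^{nm}$ are regarded as real $n\times m$ matrices, $\mathbf{q}\in\mathbb{Z}^n$ as a row vector, so $\mathbf{q}\mathbf{X}\in\mathbb{R}^m$; $|\cdot|$ denotes the supremum norm on $\mathbb{R}^m$. For $\Psi:\mathbb{Z}^n\to\mathbb{R}_{>0}$ consider the inequality ( * ) $|\mathbf{q}\mathbf{X}+\mathbf{p}|<\Psi(\mathbf{q})$, with $\mathbf{p}=(p_1,\dots,p_m)\in\mathbb{Z}^m$, $\mathbf{q}\in\mathbb{Z}^n\setminus\{\mathbf{0}\}$. $\mathcal{A}_{n,m}(\Psi)$ is the set of $\mathbf{X}\in[0,1]^{nm}$ for which ( * ) holds for infinitely many pairs $(\mathbf{p},\mathbf{q})$; $\mathcal{A}'_{n,m}(\Psi)$ is the set of $\mathbf{X}\in[0,1]^{nm}$ for which ( * ) holds for infinitely many $(\mathbf{p},\mathbf{q})$ with $\gcd(\mathbf{p},\mathbf{q})=1$ (the gcd of all components of $\mathbf{p}$ and $\mathbf{q}$); $\mathcal{A}''_{n,m}(\Psi)$ is the set of $\mathbf{X}\in[0,1]^{nm}$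 for which ( * ) holds for infinitely many $(\mathbf{p},\mathbf{q})$ with $\gcd(p_j,\mathbf{q})=1$ for every $j=1,\dots,m$. $\mathcal{A}^\circ_{n,m}$ denotes any one of $\mathcal{A}_{n,m},\mathcal{A}'_{n,m},\mathcal{A}''_{n,m}$, and $k^{-1}\Psi$ is the function $\mathbf{q}\mapsto \Psi(\mathbf{q})/k$. *)

theory Defs
  imports "HOL-Analysis.Analysis"
begin

datatype approx_kind = Plain | Coprime_All | Coprime_Each

text \<open>Matrices X in R^{n x m} are of type real^'m^'n (row index 'n, column index 'm);
  q :: int^'n is a row vector, p :: int^'m.\<close>

definition coprime_cond :: "approx_kind \<Rightarrow> int^'m \<Rightarrow> int^'n \<Rightarrow> bool" where
  "coprime_cond k p q = (case k of
      Plain \<Rightarrow> True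
    | Coprime_All \<Rightarrow> Gcd (range (\<lambda>j. p $ j) \<union> range (\<lambda>i. q $ i)) = 1
    | Coprime_Each \<Rightarrow> (\<forall>j. Gcd (insert (p $ j) (range (\<lambda>i. q $ i))) = 1))"

definition approx_ineq :: "(int^'n \<Rightarrow> real) \<Rightarrow> real^'m^'n \<Rightarrow> int^'m \<Rightarrow> int^'n \<Rightarrow> bool" where
  "approx_ineq \<Psi> X p q =
     ((MAX j\<in>UNIV. \<bar>(\<Sum>i\<in>UNIV. of_int (q $ i) * X $ i $ j) + of_int (p $ j)\<bar>) < \<Psi> q)"

definition unit_cube :: "(real^'m^'n) set" where
  "unit_cube = {X. \<forall>i j. 0 \<le> X $ i $ j \<and> X $ i $ j \<le> 1}"

definition approx_set :: "approx_kind \<Rightarrow> (int^'n \<Rightarrow> real) \<Rightarrow> (real^'m^'n) set" where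
  "approx_set k \<Psi> = {X \<in> unit_cube.
      infinite {(p, q). q \<noteq> 0 \<and> coprime_cond k p q \<and> approx_ineq \<Psi> X p q}}"

end

theory Submission
  imports Defs
begin

definition fj :: "real^'m^'n \<Rightarrow> int^'m \<Rightarrow> int^'n \<Rightarrow> 'm \<Rightarrow> real" where
  "fj X p q j = (\<Sum>i\<in>UNIV. of_int (q $ i) * X $ i $ j) + of_int (p $ j)"

definition nq :: "int^'n \<Rightarrow> real" where
  "nq q = (MAX i\<in>UNIV. \<bar>real_of_int (q $ i)\<bar>)"

lemma approx_ineq_iff: "approx_ineq \<Psi> X p q \<longleftrightarrow> (\<forall>j. \<bar>fj X p q j\<bar> < \<Psi> q)"
  by (simp add: approx_ineq_def fj_def)

lemma nq_ge: "\<bar>real_of_int (q $ i)\<bar> \<le> nq q"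
  unfolding nq_def by (rule Max_ge) auto

lemma nq_attained: "\<exists>i. \<bar>real_of_int (q $ i)\<bar> = nq q"
proof -
  have "nq q \<in> (\<lambda>i. \<bar>real_of_int (q $ i)\<bar>) ` UNIV" unfolding nq_def by (rule Max_in) auto
  then show ?thesis by auto
qed

lemma fin_vec: "finite {v::int^'k. \<forall>i. \<bar>v $ i\<bar> \<le> M}"
proof -
  have "{v::int^'k. \<forall>i. \<bar>v $ i\<bar> \<le> M} \<subseteq> vec_lambda ` (PiE UNIV (\<lambda>_. {-M..M}))"
  proof
    fix v :: "int^'k" assume "v \<in> {v. \<forall>i. \<bar>v $ i\<bar> \<le> M}"
    then have "(\<lambda>i. v $ i) \<in> PiE UNIV (\<lambda>_. {-M..M})" by (auto simp: abs_le_iff) (metis minus_le_iff)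
    then show "v \<in> vec_lambda ` (PiE UNIV (\<lambda>_. {-M..M}))"
      by (metis (no_types) image_eqI vec_lambda_eta)
  qed
  moreover have "finite (PiE (UNIV::'k set) (\<lambda>_. {-M..M}))" by (intro finite_PiE) auto
  ultimately show ?thesis by (meson finite_imageI finite_subset)
qed

lemma fin_vec_real: "finite {v::int^'k. \<forall>i. \<bar>real_of_int (v $ i)\<bar> \<le> R}"
proof -
  have "{v::int^'k. \<forall>i. \<bar>real_of_int (v $ i)\<bar> \<le> R} \<subseteq> {v::int^'k. \<forall>i. \<bar>v $ i\<bar> \<le> \<lceil>R\<rceil>}"
  proof (rule subsetI, simp, rule allI)
    fix v :: "int^'k" and i
    assume a: "\<forall>i. \<bar>real_of_int (v $ i)\<bar> \<le> R"
    have "\<bar>real_of_int (v $ i)\<bar> \<le> of_int \<lceil>R\<rceil>" using a[rule_format, of i] le_of_int_ceiling[of R] by linarith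
    then have "real_of_int \<bar>v $ i\<bar> \<le> of_int \<lceil>R\<rceil>" by simp
    then show "\<bar>v $ i\<bar> \<le> \<lceil>R\<rceil>" by (simp only: of_int_le_iff)
  qed
  then show ?thesis using fin_vec finite_subset by blast
qed

lemma fin_T:
  fixes \<Psi> :: "int^'n \<Rightarrow> real" and X :: "real^'m^'n"
  shows "finite {(p,q). approx_ineq \<Psi> X p q \<and> nq q \<le> B}"
proof -
  define R where "R q = \<Psi> q + (\<Sum>j\<in>UNIV. \<Sum>i\<in>UNIV. \<bar>real_of_int (q $ i)\<bar> * \<bar>X $ i $ j\<bar>)" for q :: "int^'n"
  define Qs where "Qs = {q::int^'n. \<forall>i. \<bar>real_of_int (q $ i)\<bar> \<le> B}"
  have "{(p,q). approx_ineq \<Psi> X p q \<and> nq q \<le> B} \<subseteq> (\<Union>q\<in>Qs. (\<lambda>p. (p,q)) ` {p::int^'m. \<forall>j. \<bar>real_of_int (p $ j)\<bar> \<le> R q})"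
  proof clarify
    fix p :: "int^'m" and q :: "int^'n"
    assume a: "approx_ineq \<Psi> X p q" "nq q \<le> B"
    have "q \<in> Qs" unfolding Qs_def using a(2) nq_ge order_trans by blast
    moreover have "\<bar>real_of_int (p $ j)\<bar> \<le> R q" for j
    proof -
      have h: "\<bar>fj X p q j\<bar> < \<Psi> q" using a(1) approx_ineq_iff by blast
      have s1: "\<bar>\<Sum>i\<in>UNIV. of_int (q $ i) * X $ i $ j\<bar> \<le> (\<Sum>i\<in>UNIV. \<bar>real_of_int (q $ i)\<bar> * \<bar>X $ i $ j\<bar>)"
        by (rule order_trans[OF sum_abs]) (simp add: abs_mult)
      have s2: "(\<Sum>i\<in>UNIV. \<bar>real_of_int (q $ i)\<bar> * \<bar>X $ i $ j\<bar>) \<le> (\<Sum>j\<in>UNIV. \<Sum>i\<in>UNIV. \<bar>real_of_int (q $ i)\<bar> * \<bar>X $ i $ j\<bar>)"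
        by (rule member_le_sum) (auto intro: sum_nonneg)
      have "real_of_int (p $ j) = fj X p q j - (\<Sum>i\<in>UNIV. of_int (q $ i) * X $ i $ j)"
        by (simp add: fj_def)
      then show ?thesis using h s1 s2 unfolding R_def by linarith
    qed
    ultimately show "(p, q) \<in> (\<Union>q\<in>Qs. (\<lambda>p. (p,q)) ` {p::int^'m. \<forall>j. \<bar>real_of_int (p $ j)\<bar> \<le> R q})"
      by (intro UN_I[where a=q] image_eqI[where x=p]) auto
  qed
  moreover have "finite (\<Union>q\<in>Qs. (\<lambda>p. (p,q)) ` {p::int^'m. \<forall>j. \<bar>real_of_int (p $ j)\<bar> \<le> R q})"
    unfolding Qs_def by (intro finite_UN_I fin_vec_real finite_imageI)
  ultimately show ?thesis by (rule finite_subset)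
qed

lemma inf_iff:
  "infinite {(p,q). P p q \<and> approx_ineq \<Psi> X p q} \<longleftrightarrow> (\<forall>B. \<exists>p q. P p q \<and> approx_ineq \<Psi> X p q \<and> nq q > B)"
proof
  assume inf: "infinite {(p,q). P p q \<and> approx_ineq \<Psi> X p q}"
  show "\<forall>B. \<exists>p q. P p q \<and> approx_ineq \<Psi> X p q \<and> nq q > B"
  proof
    fix B
    show "\<exists>p q. P p q \<and> approx_ineq \<Psi> X p q \<and> nq q > B"
    proof (rule ccontr)
      assume "\<not> ?thesis"
      then have "{(p,q). P p q \<and> approx_ineq \<Psi> X p q} \<subseteq> {(p,q). approx_ineq \<Psi> X p q \<and> nq q \<le> B}"
        by (auto simp: not_less)
      from finite_subset[OF this fin_T] inf show False by simp
    qed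
  qed
next
  assume ub: "\<forall>B. \<exists>p q. P p q \<and> approx_ineq \<Psi> X p q \<and> nq q > B"
  show "infinite {(p,q). P p q \<and> approx_ineq \<Psi> X p q}"
  proof
    assume fin: "finite {(p,q). P p q \<and> approx_ineq \<Psi> X p q}"
    define B where "B = Max (insert 0 ((\<lambda>(p,q). nq q) ` {(p,q). P p q \<and> approx_ineq \<Psi> X p q}))"
    obtain p q where pq: "P p q" "approx_ineq \<Psi> X p q" "nq q > B" using ub by blast
    have "nq q \<in> (\<lambda>(p,q). nq q) ` {(p,q). P p q \<and> approx_ineq \<Psi> X p q}"
      using pq by (auto intro: image_eqI[where x="(p,q)"])
    then have "nq q \<le> B" unfolding B_def using fin by (intro Max_ge) auto
    with pq show False by simp
  qed
qed


lemma inf_iff_nat: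
  "infinite {(p,q). P p q \<and> approx_ineq \<Psi> X p q} \<longleftrightarrow> (\<forall>B::nat. \<exists>p q. P p q \<and> approx_ineq \<Psi> X p q \<and> nq q > real B)"
proof -
  have "(\<forall>B::real. \<exists>p q. P p q \<and> approx_ineq \<Psi> X p q \<and> nq q > B) \<longleftrightarrow> (\<forall>B::nat. \<exists>p q. P p q \<and> approx_ineq \<Psi> X p q \<and> nq q > real B)"
  proof
    assume "\<forall>B::real. \<exists>p q. P p q \<and> approx_ineq \<Psi> X p q \<and> nq q > B"
    then show "\<forall>B::nat. \<exists>p q. P p q \<and> approx_ineq \<Psi> X p q \<and> nq q > real B" by blast
  next
    assume a: "\<forall>B::nat. \<exists>p q. P p q \<and> approx_ineq \<Psi> X p q \<and> nq q > real B"
    show "\<forall>B::real. \<exists>p q. P p q \<and> approx_ineq \<Psi> X p q \<and> nq q > B"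
    proof
      fix B :: real
      obtain n :: nat where n: "B < real n" using reals_Archimedean2 by blast
      obtain p q where "P p q" "approx_ineq \<Psi> X p q" "nq q > real n" using a by blast
      then show "\<exists>p q. P p q \<and> approx_ineq \<Psi> X p q \<and> nq q > B" using n by (intro exI[of _ p] exI[of _ q]) auto
    qed
  qed
  then show ?thesis using inf_iff[of P \<Psi> X] by simp
qed

lemma open_lebesgue: "open S \<Longrightarrow> S \<in> sets lebesgue"
  by (metis borel_open sets_completionI_sets sets_lborel)

lemma closed_lebesgue: "closed S \<Longrightarrow> S \<in> sets lebesgue"
  by (metis borel_closed sets_completionI_sets sets_lborel)

lemma open_ineq: "open {X::real^'m^'n. approx_ineq \<Psi> X p q}"
proof -
  have eq: "{X::real^'m^'n. approx_ineq \<Psi> X p q} = (\<Inter>j. {X. \<bar>fj X p q j\<bar> < \<Psi> q})"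
    by (auto simp: approx_ineq_iff)
  have "open {X::real^'m^'n. \<bar>fj X p q j\<bar> < \<Psi> q}" for j
    unfolding fj_def by (intro open_Collect_less continuous_intros)
  then show ?thesis unfolding eq by (intro open_INT) auto
qed

lemma closed_cube: "closed (unit_cube :: (real^'m^'n) set)"
proof -
  have eq: "(unit_cube :: (real^'m^'n) set) = (\<Inter>i. \<Inter>j. {X. 0 \<le> X $ i $ j} \<inter> {X. X $ i $ j \<le> 1})"
    by (auto simp: unit_cube_def)
  have "closed {X::real^'m^'n. 0 \<le> X $ i $ j}" "closed {X::real^'m^'n. X $ i $ j \<le> 1}" for i j
    by (intro closed_Collect_le continuous_intros)+
  then show ?thesis unfolding eq by (intro closed_INT ballI closed_Int) auto
qed

lemma norm_mat_le: "norm (X::real^'m^'n) \<le> (\<Sum>i\<in>UNIV. \<Sum>j\<in>UNIV. \<bar>X $ i $ j\<bar>)"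
proof -
  have "norm X \<le> (\<Sum>i\<in>UNIV. norm (X $ i))"
    unfolding norm_vec_def by (rule L2_set_le_sum) auto
  also have "\<dots> \<le> (\<Sum>i\<in>UNIV. \<Sum>j\<in>UNIV. \<bar>X $ i $ j\<bar>)"
    by (intro sum_mono norm_le_l1_cart)
  finally show ?thesis .
qed

lemma bounded_cube: "bounded (unit_cube :: (real^'m^'n) set)"
proof -
  have "norm X \<le> real CARD('n) * real CARD('m)" if "X \<in> unit_cube" for X :: "real^'m^'n"
  proof -
    have "norm X \<le> (\<Sum>i\<in>UNIV. \<Sum>j\<in>UNIV. \<bar>X $ i $ j\<bar>)" by (rule norm_mat_le)
    also have "\<dots> \<le> (\<Sum>i\<in>(UNIV::'n set). \<Sum>j\<in>(UNIV::'m set). 1)"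
      using that by (intro sum_mono) (auto simp: unit_cube_def)
    finally show ?thesis by simp
  qed
  then show ?thesis unfolding bounded_iff by blast
qed

lemma approx_set_alt:
  fixes \<Psi> :: "int^'n \<Rightarrow> real"
  shows "(approx_set k \<Psi> :: (real^'m^'n) set) = {X \<in> unit_cube. \<forall>B::nat. \<exists>p q. (q \<noteq> 0 \<and> coprime_cond k p q) \<and> approx_ineq \<Psi> X p q \<and> nq q > real B}"
proof -
  have "{(p, q). q \<noteq> 0 \<and> coprime_cond k p q \<and> approx_ineq \<Psi> X p q}
      = {(p, q). (q \<noteq> 0 \<and> coprime_cond k p q) \<and> approx_ineq \<Psi> X p q}" for X :: "real^'m^'n"
    by auto
  show ?thesis unfolding approx_set_def
  proof (rule Collect_cong)
    fix X :: "real^'m^'n"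
    show "(X \<in> unit_cube \<and> infinite {(p, q). q \<noteq> 0 \<and> coprime_cond k p q \<and> approx_ineq \<Psi> X p q}) =
      (X \<in> unit_cube \<and> (\<forall>B::nat. \<exists>p q. (q \<noteq> 0 \<and> coprime_cond k p q) \<and> approx_ineq \<Psi> X p q \<and> nq q > real B))"
      using inf_iff_nat[of "\<lambda>p q. q \<noteq> 0 \<and> coprime_cond k p q" \<Psi> X] by simp
  qed
qed

lemma approx_set_meas:
  fixes \<Psi> :: "int^'n \<Rightarrow> real"
  shows "(approx_set k \<Psi> :: (real^'m^'n) set) \<in> sets lebesgue"
proof -
  define U where "U B = (\<Union>g\<in>{g. snd g \<noteq> 0 \<and> coprime_cond k (fst g) (snd g) \<and> nq (snd g) > real B}.
       {X::real^'m^'n. approx_ineq \<Psi> X (fst g) (snd g)})" for B :: nat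
  have eq: "approx_set k \<Psi> = unit_cube \<inter> (\<Inter>B. U B)"
    unfolding approx_set_alt U_def by (auto; meson)
  have "U B \<in> sets lebesgue" for B
    unfolding U_def by (intro open_lebesgue open_UN ballI open_ineq)
  then have "(\<Inter>B. U B) \<in> sets lebesgue" by (intro sets.countable_INT) auto
  then show ?thesis unfolding eq using closed_lebesgue[OF closed_cube] by (intro sets.Int)
qed


lemma nq_pos: "q \<noteq> 0 \<Longrightarrow> nq q > 0"
proof -
  assume "q \<noteq> 0"
  then obtain i where "q $ i \<noteq> 0" by (metis vec_eq_iff zero_index)
  then have "0 < \<bar>real_of_int (q $ i)\<bar>" by simp
  then show ?thesis using nq_ge[of q i] by linarith
qed

lemma entry_le_norm: "\<bar>(X::real^'m^'n) $ i $ j\<bar> \<le> norm X"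
  using component_le_norm_cart[of "X $ i" j] Finite_Cartesian_Product.norm_nth_le[of X i] by linarith

lemma fj_diff: "fj Y p q j - fj y p q j = (\<Sum>i\<in>UNIV. of_int (q $ i) * (Y - y) $ i $ j)"
  by (simp add: fj_def algebra_simps sum_subtractf)

lemma geom:
  fixes x :: "real^'m^'n" and q :: "int^'n" and p :: "int^'m" and \<Psi> \<Phi> :: "int^'n \<Rightarrow> real"
  assumes q: "q \<noteq> 0" and ineq: "approx_ineq \<Psi> x p q" and e: "0 < e" "e \<le> 1"
    and \<Phi>: "\<Phi> q = e * \<Psi> q"
  shows "\<exists>y. ball y (e * \<Psi> q / (real CARD('n) * nq q)) \<subseteq> ball x ((real CARD('m) + 1) * \<Psi> q / nq q) \<and>
             (\<forall>Y \<in> ball y (e * \<Psi> q / (real CARD('n) * nq q)). approx_ineq \<Phi> Y p q)"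
proof -
  let ?n = "real CARD('n)" and ?m = "real CARD('m)"
  have nqp: "nq q > 0" using nq_pos[OF q] .
  have fx: "\<bar>fj x p q j\<bar> < \<Psi> q" for j using ineq approx_ineq_iff by blast
  then have Ppos: "\<Psi> q > 0" by (meson abs_ge_zero le_less_trans)
  obtain i0 where i0: "\<bar>real_of_int (q $ i0)\<bar> = nq q" using nq_attained by blast
  define c where "c = real_of_int (q $ i0)"
  have c0: "c \<noteq> 0" using i0 nqp c_def by auto
  define y :: "real^'m^'n" where "y = (\<chi> i. \<chi> j. x $ i $ j - (if i = i0 then fj x p q j / c else 0))"
  have yent: "x $ i $ j - y $ i $ j = (if i = i0 then fj x p q j / c else 0)" for i j
    by (simp add: y_def)
  have fy: "fj y p q j = 0" for j
  proof -
    have "fj x p q j - fj y p q j = (\<Sum>i\<in>UNIV. of_int (q $ i) * (x - y) $ i $ j)" by (rule fj_diff)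
    also have "\<dots> = (\<Sum>i\<in>UNIV. if i = i0 then c * (fj x p q j / c) else 0)"
      by (intro sum.cong) (auto simp: yent c_def)
    also have "\<dots> = fj x p q j" using c0 by simp
    finally show ?thesis by simp
  qed
  define s where "s = e * \<Psi> q / (?n * nq q)"
  define d where "d = (?m + 1) * \<Psi> q / nq q"
  have n1: "?n \<ge> 1" by simp
  have s_le: "s \<le> \<Psi> q / nq q"
  proof -
    have "e * \<Psi> q \<le> ?n * \<Psi> q" using e n1 Ppos by (meson less_le_not_le mult_right_mono order_trans)
    then have "e * \<Psi> q / (?n * nq q) \<le> ?n * \<Psi> q / (?n * nq q)"
      using nqp by (intro divide_right_mono) auto
    then show ?thesis unfolding s_def by simp
  qed
  have nxy: "norm (x - y) \<le> ?m * \<Psi> q / nq q"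
  proof -
    have "norm (x - y) \<le> (\<Sum>i\<in>UNIV. \<Sum>j\<in>UNIV. \<bar>(x - y) $ i $ j\<bar>)" by (rule norm_mat_le)
    also have "\<dots> = (\<Sum>i\<in>UNIV. if i = i0 then (\<Sum>j\<in>UNIV. \<bar>fj x p q j / c\<bar>) else 0)"
      by (intro sum.cong) (auto simp: yent)
    also have "\<dots> = (\<Sum>j\<in>UNIV. \<bar>fj x p q j / c\<bar>)"
      by simp
    also have "\<dots> \<le> (\<Sum>j\<in>(UNIV::'m set). \<Psi> q / nq q)"
    proof (intro sum_mono)
      fix j
      have "\<bar>fj x p q j / c\<bar> = \<bar>fj x p q j\<bar> / nq q" using i0 c_def by (simp add: abs_divide)
      also have "\<dots> \<le> \<Psi> q / nq q" using fx[of j] nqp by (intro divide_right_mono) auto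
      finally show "\<bar>fj x p q j / c\<bar> \<le> \<Psi> q / nq q" .
    qed
    also have "\<dots> = ?m * \<Psi> q / nq q" by simp
    finally show ?thesis .
  qed
  have sub: "ball y s \<subseteq> ball x d"
  proof
    fix Y assume "Y \<in> ball y s"
    then have "dist y Y < s" by simp
    moreover have "dist x y \<le> ?m * \<Psi> q / nq q" using nxy by (simp add: dist_norm)
    moreover have "d = ?m * \<Psi> q / nq q + \<Psi> q / nq q" unfolding d_def by (simp add: add_divide_distrib distrib_right)
    ultimately have "dist x Y < d" using dist_triangle[of x Y y] s_le by linarith
    then show "Y \<in> ball x d" by simp
  qed
  have good: "approx_ineq \<Phi> Y p q" if Y: "Y \<in> ball y s" for Y
  proof -
    have nY: "norm (Y - y) < s" using Y by (simp add: dist_norm norm_minus_commute)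
    have "\<bar>fj Y p q j\<bar> < \<Phi> q" for j
    proof -
      have "fj Y p q j = (\<Sum>i\<in>UNIV. of_int (q $ i) * (Y - y) $ i $ j)" using fj_diff[of Y p q j y] fy[of j] by simp
      then have "\<bar>fj Y p q j\<bar> \<le> (\<Sum>i\<in>UNIV. \<bar>of_int (q $ i) * (Y - y) $ i $ j\<bar>)" by (simp add: sum_abs)
      also have "\<dots> \<le> (\<Sum>i\<in>(UNIV::'n set). nq q * norm (Y - y))"
      proof (intro sum_mono)
        fix i
        show "\<bar>real_of_int (q $ i) * (Y - y) $ i $ j\<bar> \<le> nq q * norm (Y - y)"
          unfolding abs_mult using nq_ge[of q i] entry_le_norm[of "Y - y" i j]
          by (intro mult_mono) auto
      qed
      also have "\<dots> = ?n * nq q * norm (Y - y)" by simp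
      also have "\<dots> < ?n * nq q * s" using nY nqp by (intro mult_strict_left_mono) auto
      also have "\<dots> = e * \<Psi> q" unfolding s_def using nqp by (simp add: field_simps)
      finally show ?thesis using \<Phi> by simp
    qed
    then show ?thesis using approx_ineq_iff by blast
  qed
  show ?thesis using sub good unfolding s_def d_def by blast
qed


lemma dens:
  fixes S :: "'a::euclidean_space set"
  assumes S: "S \<in> lmeasurable" and k: "0 < \<kappa>"
    and H: "\<And>x r. x \<in> S \<Longrightarrow> 0 < r \<Longrightarrow> \<exists>d y s. 0 < d \<and> d < r \<and> \<kappa> * d \<le> s \<and> ball y s \<subseteq> ball x d \<and> ball y s \<inter> S = {}"
  shows "negligible S"
proof (rule ccontr)
  assume nn: "\<not> negligible S"
  define \<kappa>' where "\<kappa>' = min \<kappa> 1"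
  have k': "0 < \<kappa>'" "\<kappa>' \<le> 1" "\<kappa>' \<le> \<kappa>" using k by (auto simp: \<kappa>'_def)
  define \<tau> where "\<tau> = \<kappa>' ^ DIM('a)"
  have \<tau>: "0 < \<tau>" "\<tau> \<le> 1" using k' by (auto simp: \<tau>_def power_le_one)
  define \<mu> where "\<mu> = measure lebesgue S"
  have "\<mu> \<noteq> 0" using nn negligible_iff_measure0[OF S] \<mu>_def by simp
  then have \<mu>: "\<mu> > 0" using measure_nonneg[of lebesgue S] \<mu>_def by linarith
  define \<eta> where "\<eta> = \<tau> * \<mu> / 2"
  have \<eta>: "\<eta> > 0" using \<tau> \<mu> by (simp add: \<eta>_def)
  have Ssets: "S \<in> sets lebesgue" using S by auto
  obtain T where T: "open T" "S \<subseteq> T" "(T - S) \<in> lmeasurable" "emeasure lebesgue (T - S) < ennreal \<eta>"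
    using sets_lebesgue_outer_open[OF Ssets \<eta>] by blast
  have TSU: "T = S \<union> (T - S)" using T(2) by auto
  have Tm: "T \<in> lmeasurable" using fmeasurable.Un[OF S T(3)] TSU by simp
  have mTS: "measure lebesgue (T - S) < \<eta>"
    using T(4) emeasure_eq_measure2[OF T(3)] \<eta> by (simp add: ennreal_less_iff)
  have mT: "measure lebesgue T < \<mu> + \<eta>"
  proof -
    have "measure lebesgue T = measure lebesgue (S \<union> (T - S))" using TSU by simp
    also have "\<dots> = \<mu> + measure lebesgue ((T - S) - S)" unfolding \<mu>_def by (rule measure_Un2[OF S T(3)])
    also have "(T - S) - S = T - S" by auto
    finally show ?thesis using mTS by simp
  qed
  define a :: "'a \<times> real \<times> 'a \<times> real \<Rightarrow> 'a" where "a = (\<lambda>(x,d,y,s). x)"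
  define r :: "'a \<times> real \<times> 'a \<times> real \<Rightarrow> real" where "r = (\<lambda>(x,d,y,s). d)"
  define b :: "'a \<times> real \<times> 'a \<times> real \<Rightarrow> 'a" where "b = (\<lambda>(x,d,y,s). y)"
  define t :: "'a \<times> real \<times> 'a \<times> real \<Rightarrow> real" where "t = (\<lambda>(x,d,y,s). s)"
  define K where "K = {i. a i \<in> S \<and> 0 < r i \<and> \<kappa>' * r i \<le> t i \<and> ball (b i) (t i) \<subseteq> ball (a i) (r i)
     \<and> ball (b i) (t i) \<inter> S = {} \<and> ball (a i) (r i) \<subseteq> T}"
  have cov: "\<exists>i. i \<in> K \<and> x \<in> ball (a i) (r i) \<and> r i < e" if x: "x \<in> S" and e: "0 < e" for x e
  proof -
    obtain \<rho> where \<rho>: "\<rho> > 0" "ball x \<rho> \<subseteq> T" using T(1) T(2) x open_contains_ball by blast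
    obtain d y s where dys: "0 < d" "d < min e \<rho>" "\<kappa> * d \<le> s" "ball y s \<subseteq> ball x d" "ball y s \<inter> S = {}"
      using H[OF x, of "min e \<rho>"] e \<rho> by auto
    have "\<kappa>' * d \<le> s" using dys(1,3) k'(3) by (meson mult_right_mono less_le order_trans)
    moreover have "ball x d \<subseteq> T" using \<rho>(2) dys(2) by (meson min.strict_boundedE order_trans subset_ball less_imp_le)
    ultimately have "(x,d,y,s) \<in> K" using dys x unfolding K_def a_def r_def b_def t_def by auto
    moreover have "x \<in> ball (a (x,d,y,s)) (r (x,d,y,s))" using dys(1) by (simp add: a_def r_def)
    moreover have "r (x,d,y,s) < e" using dys(2) by (simp add: r_def)
    ultimately show ?thesis by blast
  qed
  obtain C where C: "countable C" "C \<subseteq> K"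
      "pairwise (\<lambda>i j. disjnt (ball (a i) (r i)) (ball (a j) (r j))) C"
      "negligible (S - (\<Union>i\<in>C. ball (a i) (r i)))"
    using Vitali_covering_theorem_balls[of S K a r] cov by blast
  define B where "B i = ball (a i) (r i)" for i
  define V where "V i = ball (b i) (t i)" for i
  have VB: "V i \<subseteq> B i" "V i \<inter> S = {}" "B i \<subseteq> T" "\<kappa>' * r i \<le> t i" "0 < r i" if "i \<in> C" for i
    using that C(2) unfolding K_def B_def V_def by auto
  have disjB: "disjoint_family_on B C"
    using C(3) unfolding disjoint_family_on_def pairwise_def disjnt_def B_def by blast
  have disjV: "disjoint_family_on V C"
    using disjB VB(1) unfolding disjoint_family_on_def by blast
  define U where "U = (\<Union>(B ` C))"
  define W where "W = (\<Union>(V ` C))"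
  have UT: "U \<subseteq> T" using VB(3) unfolding U_def by blast
  have WU: "W \<subseteq> U" using VB(1) unfolding U_def W_def by blast
  have WS: "W \<inter> S = {}" using VB(2) unfolding W_def by blast
  have Usets: "U \<in> sets lebesgue" unfolding U_def B_def by (intro open_lebesgue open_UN) auto
  have Wsets: "W \<in> sets lebesgue" unfolding W_def V_def by (intro open_lebesgue open_UN) auto
  have Um: "U \<in> lmeasurable" using fmeasurableI2[OF Tm UT Usets] .
  have Wm: "W \<in> lmeasurable" using fmeasurableI2[OF Um WU Wsets] .
  have eU: "emeasure lebesgue U = (\<integral>\<^sup>+i. emeasure lebesgue (B i) \<partial>count_space C)"
    unfolding U_def by (rule emeasure_UN_countable) (auto simp: B_def C(1) disjB)
  have eW: "emeasure lebesgue W = (\<integral>\<^sup>+i. emeasure lebesgue (V i) \<partial>count_space C)"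
    unfolding W_def by (rule emeasure_UN_countable) (auto simp: V_def C(1) disjV)
  have ball_ineq: "ennreal \<tau> * emeasure lebesgue (B i) \<le> emeasure lebesgue (V i)" if i: "i \<in> C" for i
  proof -
    have r0: "0 < r i" and tr: "\<kappa>' * r i \<le> t i" using VB[OF i] by auto
    have t0: "0 \<le> t i" using tr r0 k'(1) by (meson less_le mult_pos_pos order_trans)
    define u where "u = measure lborel (ball (0::'a) 1)"
    have u0: "0 \<le> u" unfolding u_def by simp
    have mB: "measure lebesgue (B i) = r i ^ DIM('a) * u"
      unfolding B_def u_def using content_ball_conv_unit_ball[of "r i" "a i"] r0 by simp
    have mV: "measure lebesgue (V i) = t i ^ DIM('a) * u"
      unfolding V_def u_def using content_ball_conv_unit_ball[of "t i" "b i"] t0 by simp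
    have "\<tau> * (r i ^ DIM('a)) = (\<kappa>' * r i) ^ DIM('a)" by (simp add: \<tau>_def power_mult_distrib)
    also have "\<dots> \<le> t i ^ DIM('a)" using tr k'(1) r0 by (intro power_mono) auto
    finally have "\<tau> * measure lebesgue (B i) \<le> measure lebesgue (V i)"
      unfolding mB mV using u0 by (metis mult.assoc mult_right_mono)
    then have "ennreal (\<tau> * measure lebesgue (B i)) \<le> ennreal (measure lebesgue (V i))"
      by (rule ennreal_leI)
    moreover have "emeasure lebesgue (B i) = ennreal (measure lebesgue (B i))"
      unfolding B_def by (rule emeasure_eq_measure2) simp
    moreover have "emeasure lebesgue (V i) = ennreal (measure lebesgue (V i))"
      unfolding V_def by (rule emeasure_eq_measure2) simp
    ultimately show ?thesis using \<tau>(1) by (simp add: ennreal_mult)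
  qed
  have "ennreal \<tau> * emeasure lebesgue U \<le> emeasure lebesgue W"
  proof -
    have "ennreal \<tau> * emeasure lebesgue U = (\<integral>\<^sup>+i. ennreal \<tau> * emeasure lebesgue (B i) \<partial>count_space C)"
      unfolding eU by (rule nn_integral_cmult[symmetric]) simp
    also have "\<dots> \<le> (\<integral>\<^sup>+i. emeasure lebesgue (V i) \<partial>count_space C)"
      by (rule nn_integral_mono) (use ball_ineq in auto)
    finally show ?thesis unfolding eW .
  qed
  then have "ennreal (\<tau> * measure lebesgue U) \<le> ennreal (measure lebesgue W)"
    using emeasure_eq_measure2[OF Um] emeasure_eq_measure2[OF Wm] \<tau>(1) by (simp add: ennreal_mult)
  then have tUW: "\<tau> * measure lebesgue U \<le> measure lebesgue W"
    by (simp add: ennreal_le_iff)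
  have "S - U \<in> null_sets lebesgue" using C(4) negligible_iff_null_sets unfolding U_def B_def by blast
  then have "measure lebesgue ((S \<inter> U) \<union> (S - U)) = measure lebesgue (S \<inter> U)"
    using Ssets Usets by (intro measure_Un_null_set) auto
  moreover have "(S \<inter> U) \<union> (S - U) = S" by auto
  ultimately have mSU: "\<mu> = measure lebesgue (S \<inter> U)" unfolding \<mu>_def by simp
  have "S \<inter> U \<subseteq> U - W" using WS by auto
  then have "measure lebesgue (S \<inter> U) \<le> measure lebesgue (U - W)"
    using Ssets Usets Wsets Um by (intro measure_mono_fmeasurable) (auto intro: fmeasurable_Diff)
  also have "\<dots> = measure lebesgue U - measure lebesgue W"
    using fmeasurableD2[OF Um] by (intro measure_Diff[OF _ fmeasurableD[OF Um] Wsets WU]) auto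
  finally have "\<mu> \<le> (1 - \<tau>) * measure lebesgue U" using mSU tUW by (simp add: algebra_simps)
  also have "\<dots> \<le> (1 - \<tau>) * measure lebesgue T"
    using \<tau> measure_mono_fmeasurable[OF UT Usets Tm] by (intro mult_left_mono) auto
  also have "\<dots> \<le> (1 - \<tau>) * (\<mu> + \<eta>)"
    using \<tau> mT by (intro mult_left_mono) auto
  also have "\<dots> = \<mu> - \<tau> * \<mu> / 2 - \<tau> * \<eta>" unfolding \<eta>_def by (simp add: field_simps)
  finally have "\<tau> * \<mu> / 2 + \<tau> * \<eta> \<le> 0" by simp
  moreover have "\<tau> * \<mu> > 0" "\<tau> * \<eta> > 0" using \<tau> \<mu> \<eta> by auto
  ultimately show False by linarith
qed



lemma int_interval_count:
  assumes L: "0 \<le> L"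
  shows "\<bar>real (card {k::int. a < of_int k \<and> of_int k < a + L}) - L\<bar> \<le> 1"
proof -
  have eq: "{k::int. a < of_int k \<and> of_int k < a + L} = {\<lfloor>a\<rfloor><..<\<lceil>a + L\<rceil>}"
    by (auto simp: floor_less_iff less_ceiling_iff)
  define c where "c = \<lceil>a + L\<rceil> - (\<lfloor>a\<rfloor> + 1)"
  have card: "card {k::int. a < of_int k \<and> of_int k < a + L} = nat c"
    unfolding eq c_def by simp
  have h1: "a + L \<le> of_int \<lceil>a + L\<rceil>" by (rule le_of_int_ceiling)
  have h2: "of_int \<lfloor>a\<rfloor> \<le> a" by (rule of_int_floor_le)
  have h3: "of_int \<lceil>a + L\<rceil> < a + L + 1" using ceiling_correct[of "a + L"] by linarith
  have h4: "a < of_int \<lfloor>a\<rfloor> + 1" using floor_correct[of a] by simp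
  have rc: "real_of_int c = of_int \<lceil>a + L\<rceil> - of_int \<lfloor>a\<rfloor> - 1" unfolding c_def by simp
  have c1: "real_of_int c \<ge> L - 1" using rc h1 h2 by linarith
  have c2: "real_of_int c < L + 1" using rc h3 h4 by linarith
  show ?thesis
  proof (cases "c \<ge> 0")
    case True
    then have "real (nat c) = real_of_int c" by simp
    then show ?thesis unfolding card using c1 c2 by linarith
  next
    case False
    then have "real (nat c) = 0" by simp
    moreover have "real_of_int c < 0" using False by simp
    ultimately show ?thesis unfolding card using c1 L by linarith
  qed
qed

definition cnt :: "nat set \<Rightarrow> real \<Rightarrow> real \<Rightarrow> nat" where
  "cnt P a L = card {k::int. a < of_int k \<and> of_int k < a + L \<and> (\<forall>p\<in>P. \<not> int p dvd k)}"

lemma fin_window: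
  fixes a L :: real
  shows "finite {k::int. a < of_int k \<and> of_int k < a + L \<and> Q k}"
proof -
  have "{k::int. a < of_int k \<and> of_int k < a + L \<and> Q k} \<subseteq> {\<lfloor>a\<rfloor><..<\<lceil>a + L\<rceil>}"
    by (auto simp: floor_less_iff less_ceiling_iff)
  then show ?thesis using finite_subset by blast
qed

lemma cnt_bound:
  assumes "finite P" "\<forall>p\<in>P. prime p" "0 \<le> L"
  shows "\<bar>real (cnt P a L) - L * (\<Prod>p\<in>P. 1 - 1 / real p)\<bar> \<le> 2 ^ card P"
  using assms
proof (induction P arbitrary: a L rule: finite_induct)
  case empty
  then show ?case using int_interval_count[of L a] by (simp add: cnt_def)
next
  case (insert p P)
  have pp: "prime p" using insert.prems by simp
  then have p0: "real p > 0" using prime_gt_0_nat by simp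
  have PP: "\<forall>q\<in>P. prime q" using insert.prems by simp
  define S where "S = {k::int. a < of_int k \<and> of_int k < a + L \<and> (\<forall>q\<in>P. \<not> int q dvd k)}"
  define D where "D = {k\<in>S. int p dvd k}"
  define S' where "S' = {j::int. a / p < of_int j \<and> of_int j < a / p + L / p \<and> (\<forall>q\<in>P. \<not> int q dvd j)}"
  have finS: "finite S" unfolding S_def by (rule fin_window)
  have DS: "D \<subseteq> S" unfolding D_def by auto
  have new: "{k::int. a < of_int k \<and> of_int k < a + L \<and> (\<forall>q\<in>insert p P. \<not> int q dvd k)} = S - D"
    unfolding S_def D_def by auto
  have Dimg: "D = (\<lambda>j. int p * j) ` S'"
  proof
    show "D \<subseteq> (\<lambda>j. int p * j) ` S'"
    proof
      fix k assume k: "k \<in> D"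
      then obtain j where j: "k = int p * j" unfolding D_def by (auto elim: dvdE)
      have "a < of_int k" "of_int k < a + L" using k unfolding D_def S_def by auto
      then have "a < real p * of_int j" "real p * of_int j < a + L" using j by auto
      then have b1: "a / p < of_int j" "of_int j < a / p + L / p" using p0
        by (simp_all add: field_simps)
      have "\<not> int q dvd j" if q: "q \<in> P" for q
      proof
        assume "int q dvd j"
        then have "int q dvd k" using j by simp
        then show False using k q unfolding D_def S_def by auto
      qed
      then have "j \<in> S'" using b1 unfolding S'_def by auto
      then show "k \<in> (\<lambda>j. int p * j) ` S'" using j by auto
    qed
  next
    show "(\<lambda>j. int p * j) ` S' \<subseteq> D"
    proof
      fix k assume "k \<in> (\<lambda>j. int p * j) ` S'"
      then obtain j where j: "j \<in> S'" "k = int p * j" by auto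
      have "a / p < of_int j" "of_int j < a / p + L / p" using j(1) unfolding S'_def by auto
      then have b: "a < of_int k" "of_int k < a + L" using p0 j(2) by (simp_all add: field_simps)
      have "\<not> int q dvd k" if q: "q \<in> P" for q
      proof
        assume dv: "int q dvd k"
        have qp: "prime (int q)" using PP q by simp
        have "int q dvd int p \<or> int q dvd j" using qp dv j(2) prime_dvd_mult_iff by blast
        moreover have "\<not> int q dvd int p"
        proof
          assume "int q dvd int p"
          then have "q dvd p" by simp
          then have "q = p" using primes_dvd_imp_eq PP q pp by blast
          then show False using insert.hyps(2) q by simp
        qed
        moreover have "\<not> int q dvd j" using j(1) q unfolding S'_def by auto
        ultimately show False by blast
      qed
      then show "k \<in> D" using b j(2) unfolding D_def S_def by auto
    qed
  qed
  have injp: "inj_on (\<lambda>j. int p * j) S'" using p0 by (auto simp: inj_on_def)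
  have cD: "card D = card S'" unfolding Dimg by (rule card_image[OF injp])
  have cnew: "cnt (insert p P) a L = card S - card S'"
    unfolding cnt_def new using card_Diff_subset[OF finite_subset[OF DS finS] DS] cD by simp
  have cSS: "card S' \<le> card S" using cD card_mono[OF finS DS] by simp
  have IH1: "\<bar>real (card S) - L * (\<Prod>q\<in>P. 1 - 1 / real q)\<bar> \<le> 2 ^ card P"
    using insert.IH[OF PP insert.prems(2), of a] unfolding cnt_def S_def .
  have IH2: "\<bar>real (card S') - L / p * (\<Prod>q\<in>P. 1 - 1 / real q)\<bar> \<le> 2 ^ card P"
    using insert.IH[OF PP, of "L / p" "a / p"] insert.prems(2) p0 unfolding cnt_def S'_def by simp
  have prod: "L * (\<Prod>q\<in>insert p P. 1 - 1 / real q) = L * (\<Prod>q\<in>P. 1 - 1 / real q) - L / p * (\<Prod>q\<in>P. 1 - 1 / real q)"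
    using insert.hyps by (simp add: algebra_simps)
  have "real (cnt (insert p P) a L) = real (card S) - real (card S')" using cnew cSS by simp
  then show ?case unfolding prod using IH1 IH2 insert.hyps by simp
qed

lemma prod_bounds:
  fixes A :: "nat set"
  assumes "finite A" "\<forall>x\<in>A. 2 \<le> x"
  shows "fact (card A + 1) \<le> (\<Prod>x\<in>A. real x) \<and> 1 / real (card A + 1) \<le> (\<Prod>x\<in>A. 1 - 1 / real x)"
  using assms
proof (induction "card A" arbitrary: A)
  case 0
  then have "A = {}" by simp
  then show ?case by simp
next
  case (Suc n)
  then have ne: "A \<noteq> {}" by auto
  define M where "M = Max A"
  have MA: "M \<in> A" unfolding M_def using Suc.prems ne by simp
  define A' where "A' = A - {M}"
  have cA': "card A' = n" unfolding A'_def using Suc.hyps(2) MA Suc.prems by simp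
  have IH: "fact (n + 1) \<le> (\<Prod>x\<in>A'. real x) \<and> 1 / real (n + 1) \<le> (\<Prod>x\<in>A'. 1 - 1 / real x)"
    using Suc.hyps(1)[of A'] cA' Suc.prems unfolding A'_def by auto
  have "A \<subseteq> {2..M}" unfolding M_def using Suc.prems by auto
  then have "card A \<le> card {2..M}" by (intro card_mono) auto
  then have Mge: "n + 2 \<le> M" using Suc.hyps(2) by simp
  have splitA: "A = insert M A'" "M \<notin> A'" "finite A'" unfolding A'_def using MA Suc.prems by auto
  have p1: "(\<Prod>x\<in>A. real x) = real M * (\<Prod>x\<in>A'. real x)"
    using splitA by (metis prod.insert)
  have p2: "(\<Prod>x\<in>A. 1 - 1 / real x) = (1 - 1 / real M) * (\<Prod>x\<in>A'. 1 - 1 / real x)"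
    using splitA by (metis (no_types, lifting) prod.insert)
  have f: "fact (card A + 1) = real (n + 2) * fact (n + 1)"
    using Suc.hyps(2) by (simp add: algebra_simps)
  have "real (n + 2) * fact (n + 1) \<le> real M * (\<Prod>x\<in>A'. real x)"
    using IH Mge by (intro mult_mono) auto
  moreover
  have "1 / real (card A + 1) \<le> (1 - 1 / real M) * (\<Prod>x\<in>A'. 1 - 1 / real x)"
  proof -
    have m1: "1 - 1 / real (n + 2) \<le> 1 - 1 / real M" using Mge by (simp add: frac_le)
    have "1 / real (card A + 1) = (1 - 1 / real (n + 2)) * (1 / real (n + 1))"
      using Suc.hyps(2) by (simp add: field_simps)
    also have "\<dots> \<le> (1 - 1 / real M) * (\<Prod>x\<in>A'. 1 - 1 / real x)"
      using IH m1 Mge by (intro mult_mono) auto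
    finally show ?thesis .
  qed
  ultimately show ?case using p1 p2 f by simp
qed


lemma NT:
  fixes \<eta> :: real assumes \<eta>: "\<eta> > 0"
  obtains L0 where "\<And>(d::nat) (a::real) L. 0 < d \<Longrightarrow> \<eta> * real d \<le> L \<Longrightarrow> L0 \<le> L \<Longrightarrow>
      \<exists>k::int. a < of_int k \<and> of_int k < a + L \<and> coprime k (int d)"
proof -
  have lim: "(\<lambda>s. inverse (fact s) * (2::real) ^ s) \<longlonglongrightarrow> 0"
    by (rule summable_LIMSEQ_zero[OF summable_exp])
  have "eventually (\<lambda>s. inverse (fact s) * (2::real) ^ s < \<eta>) sequentially"
    using order_tendstoD(2)[OF lim \<eta>] .
  then obtain S0 where S0: "\<And>s. s \<ge> S0 \<Longrightarrow> inverse (fact s) * (2::real) ^ s < \<eta>"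
    by (auto simp: eventually_sequentially)
  have S0': "(2::real) ^ s < \<eta> * fact s" if "s \<ge> S0" for s
  proof -
    have fp: "(0::real) < fact s" by simp
    have "inverse (fact s) * (2::real) ^ s * fact s < \<eta> * fact s"
      using S0[OF that] fp by (intro mult_strict_right_mono) auto
    then show ?thesis using fp by (simp add: field_simps)
  qed
  define L0 where "L0 = real (S0 + 1) * 2 ^ S0 + 1"
  show ?thesis
  proof (rule that)
    fix d :: nat and a L :: real
    assume d0: "0 < d" and hL1: "\<eta> * real d \<le> L" and hL2: "L0 \<le> L"
    define P where "P = prime_factors d"
    define s where "s = card P"
    have finP: "finite P" unfolding P_def by simp
    have primesP: "\<forall>p\<in>P. prime p" unfolding P_def using in_prime_factors_imp_prime by blast
    have ge2: "\<forall>p\<in>P. 2 \<le> p" using primesP prime_ge_2_nat by blast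
    have pb: "fact (s + 1) \<le> (\<Prod>x\<in>P. real x)" "1 / real (s + 1) \<le> (\<Prod>x\<in>P. 1 - 1 / real x)"
      using prod_bounds[OF finP ge2] unfolding s_def by auto
    have prodle: "(\<Prod>p\<in>P. real p) \<le> real d"
    proof -
      have "(\<Prod>p\<in>P. real p) \<le> (\<Prod>p\<in>P. real (p ^ multiplicity p d))"
      proof (intro prod_mono conjI)
        fix p assume p: "p \<in> P"
        have "p dvd d" using p unfolding P_def by (rule in_prime_factors_imp_dvd)
        have pr: "prime p" using primesP p by blast
        have m: "multiplicity p d > 0"
          using prime_multiplicity_gt_zero_iff[OF prime_imp_prime_elem[OF pr], of d] d0 \<open>p dvd d\<close> by simp
        have "p \<le> p ^ multiplicity p d" using ge2 p m by (intro self_le_power) auto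
        then show "real p \<le> real (p ^ multiplicity p d)" by simp
      qed auto
      also have "\<dots> = real (\<Prod>p\<in>P. p ^ multiplicity p d)" by simp
      also have "\<dots> = real d" using prime_factorization_nat[OF d0] unfolding P_def by simp
      finally show ?thesis .
    qed
    have L0pos: "L0 > 0" unfolding L0_def by (simp add: add_pos_nonneg)
    have Lpos: "L > 0" using L0pos hL2 by linarith
    have key: "real (s + 1) * 2 ^ s < L"
    proof (cases "s \<ge> S0")
      case True
      have "real (s + 1) * 2 ^ s < real (s + 1) * (\<eta> * fact s)"
        using S0'[OF True] by (intro mult_strict_left_mono) auto
      also have "\<dots> = \<eta> * fact (s + 1)" by (simp add: algebra_simps)
      also have "\<dots> \<le> \<eta> * real d" using pb(1) prodle \<eta> by (intro mult_left_mono) auto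
      finally show ?thesis using hL1 by linarith
    next
      case False
      have "real (s + 1) * 2 ^ s \<le> real (S0 + 1) * 2 ^ S0"
        using False by (intro mult_mono power_increasing) auto
      then show ?thesis using hL2 unfolding L0_def by linarith
    qed
    have cb: "\<bar>real (cnt P a L) - L * (\<Prod>p\<in>P. 1 - 1 / real p)\<bar> \<le> 2 ^ s"
      using cnt_bound[OF finP primesP, of L a] Lpos unfolding s_def by simp
    have "L / real (s + 1) \<le> L * (\<Prod>p\<in>P. 1 - 1 / real p)"
      using pb(2) Lpos mult_left_mono[of "1 / real (s + 1)" _ L] by simp
    moreover have "2 ^ s < L / real (s + 1)" using key by (simp add: field_simps)
    ultimately have "real (cnt P a L) > 0" using cb by linarith
    then have "cnt P a L > 0" by simp
    then have "{k::int. a < of_int k \<and> of_int k < a + L \<and> (\<forall>p\<in>P. \<not> int p dvd k)} \<noteq> {}"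
      unfolding cnt_def by (metis card.empty less_irrefl)
    then obtain k :: int where k: "a < of_int k" "of_int k < a + L" "\<forall>p\<in>P. \<not> int p dvd k" by blast
    have "coprime k (int d)"
    proof (rule ccontr)
      assume nc: "\<not> coprime k (int d)"
      define g where "g = gcd k (int d)"
      have g0: "g \<noteq> 0" using d0 g_def by simp
      have gu: "\<not> is_unit g" using nc g_def by (simp add: coprime_iff_gcd_eq_1)
      obtain b where b: "b dvd g" "prime b" using prime_divisor_exists[OF g0 gu] by blast
      have b0: "b > 0" using prime_gt_0_int[OF b(2)] .
      have bk: "b dvd k" using b(1) g_def by (metis dvd_trans gcd_dvd1)
      have "b dvd int d" using b(1) g_def by (metis dvd_trans gcd_dvd2)
      then have "int (nat b) dvd int d" using b0 by simp
      then have "nat b dvd d" by (simp only: int_dvd_int_iff)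
      moreover have "prime (nat b)" using b(2) by simp
      ultimately have "nat b \<in> P" unfolding P_def using d0 by (intro prime_factorsI) auto
      then have "\<not> int (nat b) dvd k" using k(3) by blast
      then show False using bk b0 by simp
    qed
    then show "\<exists>k::int. a < of_int k \<and> of_int k < a + L \<and> coprime k (int d)" using k by blast
  qed
qed


lemma cc_of_each:
  fixes p :: "int^'m" and q :: "int^'n"
  assumes h: "\<And>j. coprime (p $ j) (Gcd (range (\<lambda>i. q $ i)))"
  shows "coprime_cond k p q"
proof (cases k)
  case Plain
  then show ?thesis by (simp add: coprime_cond_def)
next
  case Coprime_Each
  have "Gcd (insert (p $ j) (range (\<lambda>i. q $ i))) = 1" for j
    using h[of j] by (simp add: coprime_iff_gcd_eq_1)
  then show ?thesis using Coprime_Each by (simp add: coprime_cond_def)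
next
  case Coprime_All
  define G where "G = Gcd (range (\<lambda>j. p $ j) \<union> range (\<lambda>i. q $ i))"
  obtain j0 :: 'm where True by blast
  have g1: "G dvd p $ j0" unfolding G_def by (rule Gcd_dvd) auto
  have g2: "G dvd Gcd (range (\<lambda>i. q $ i))" unfolding G_def by (rule Gcd_greatest) (auto intro: Gcd_dvd)
  have "\<bar>G\<bar> = 1" using coprime_common_divisor_int[OF h[of j0] g1 g2] .
  moreover have "G \<ge> 0" unfolding G_def by simp
  ultimately have "G = 1" by simp
  then show ?thesis using Coprime_All by (simp add: coprime_cond_def G_def)
qed

lemma caseB:
  fixes x :: "real^'m^'n" and \<Psi> :: "int^'n \<Rightarrow> real" and l :: nat
  assumes \<delta>: "\<delta> > 0" and l: "l \<ge> 1"
    and H: "\<And>B::nat. \<exists>p q. q \<noteq> 0 \<and> coprime_cond k p q \<and> approx_ineq \<Psi> x p q \<and> nq q > real B \<and> \<Psi> q \<ge> \<delta> * nq q"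
  shows "\<exists>p q. (q \<noteq> 0 \<and> coprime_cond k p q) \<and> approx_ineq (\<lambda>q. \<Psi> q / real l) x p q \<and> nq q > real B"
proof -
  have lp: "real l > 0" using l by simp
  define \<eta> where "\<eta> = 2 * \<delta> / real l"
  have \<eta>: "\<eta> > 0" unfolding \<eta>_def using \<delta> lp by simp
  obtain L0 where L0: "\<And>(d::nat) (a::real) L. 0 < d \<Longrightarrow> \<eta> * real d \<le> L \<Longrightarrow> L0 \<le> L \<Longrightarrow>
      \<exists>k::int. a < of_int k \<and> of_int k < a + L \<and> coprime k (int d)"
    using NT[OF \<eta>] by blast
  define B' where "B' = B + nat \<lceil>L0 * real l / (2 * \<delta>)\<rceil>"
  obtain p q where pq: "q \<noteq> 0" "coprime_cond k p q" "approx_ineq \<Psi> x p q" "nq q > real B'" "\<Psi> q \<ge> \<delta> * nq q"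
    using H[of B'] by blast
  define d where "d = Gcd (range (\<lambda>i. q $ i))"
  have d0: "d \<ge> 0" unfolding d_def by simp
  obtain i1 where i1: "q $ i1 \<noteq> 0" using pq(1) by (metis vec_eq_iff zero_index)
  have "d \<noteq> 0" unfolding d_def using i1 by auto
  with d0 have dpos: "d > 0" by simp
  have "d dvd q $ i1" unfolding d_def by (rule Gcd_dvd) auto
  then have "\<bar>d\<bar> \<le> \<bar>q $ i1\<bar>" using dvd_imp_le_int[OF i1] by blast
  then have dle: "real_of_int d \<le> nq q" using nq_ge[of q i1] d0 by (metis abs_of_nonneg of_int_abs of_int_le_iff order_trans)
  define L where "L = 2 * \<Psi> q / real l"
  have nqB: "nq q > real B'" using pq(4) .
  have L1: "\<eta> * real (nat d) \<le> L"
  proof -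
    have "\<eta> * real (nat d) = 2 * \<delta> * real_of_int d / real l" unfolding \<eta>_def using d0 by simp
    also have "\<dots> \<le> 2 * \<delta> * nq q / real l" using dle \<delta> lp by (intro divide_right_mono mult_left_mono) auto
    also have "\<dots> \<le> L" unfolding L_def using pq(5) lp by (intro divide_right_mono) auto
    finally show ?thesis .
  qed
  have L2: "L0 \<le> L"
  proof -
    have "L0 * real l / (2 * \<delta>) \<le> real B'" unfolding B'_def by linarith
    then have "L0 * real l / (2 * \<delta>) < nq q" using nqB by linarith
    then have "L0 * real l < 2 * \<delta> * nq q" using \<delta> by (simp add: field_simps)
    also have "\<dots> \<le> 2 * \<Psi> q" using pq(5) by simp
    finally have "L0 * real l < 2 * \<Psi> q" .
    then show ?thesis unfolding L_def using lp by (simp add: field_simps)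
  qed
  define Pj where "Pj j kk \<longleftrightarrow> (- (\<Sum>i\<in>UNIV. of_int (q $ i) * x $ i $ j) - \<Psi> q / real l) < of_int kk \<and>
      of_int kk < (- (\<Sum>i\<in>UNIV. of_int (q $ i) * x $ i $ j) - \<Psi> q / real l) + L \<and> coprime kk (int (nat d))" for j kk
  have "\<forall>j. \<exists>kk::int. Pj j kk"
    unfolding Pj_def using L0[OF _ L1 L2] dpos by simp
  from choice[OF this] obtain kf where kf0: "\<forall>j. Pj j (kf j)" by blast
  have kf: "(- (\<Sum>i\<in>UNIV. of_int (q $ i) * x $ i $ j) - \<Psi> q / real l) < of_int (kf j) \<and>
      of_int (kf j) < (- (\<Sum>i\<in>UNIV. of_int (q $ i) * x $ i $ j) - \<Psi> q / real l) + L \<and> coprime (kf j) (int (nat d))" for j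
    using kf0 unfolding Pj_def by blast
  define p' :: "int^'m" where "p' = (\<chi> j. kf j)"
  have "\<bar>fj x p' q j\<bar> < \<Psi> q / real l" for j
  proof -
    have "fj x p' q j = (\<Sum>i\<in>UNIV. of_int (q $ i) * x $ i $ j) + of_int (kf j)" unfolding fj_def p'_def by simp
    moreover have "L = 2 * (\<Psi> q / real l)" unfolding L_def by simp
    ultimately show ?thesis using kf[of j] by (simp add: abs_less_iff)
  qed
  then have ai: "approx_ineq (\<lambda>q. \<Psi> q / real l) x p' q" using approx_ineq_iff[of "\<lambda>q. \<Psi> q / real l" x p' q] by simp
  have "coprime (p' $ j) (Gcd (range (\<lambda>i. q $ i)))" for j
    using kf[of j] d0 unfolding p'_def d_def by simp
  then have "coprime_cond k p' q" by (rule cc_of_each)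
  moreover have "nq q > real B" using nqB unfolding B'_def by simp
  ultimately show ?thesis using ai pq(1) by blast
qed


lemma aux_ratio:
  fixes M N Q L P :: real
  shows "M \<noteq> 0 \<Longrightarrow> N \<noteq> 0 \<Longrightarrow> Q \<noteq> 0 \<Longrightarrow> L \<noteq> 0 \<Longrightarrow> ((1/L)/(N*M)) * (M*P/Q) = (1/L)*P/(N*Q)"
  by (simp add: field_simps)

lemma key:
  fixes \<Psi> :: "int^'n \<Rightarrow> real" and l :: nat
  assumes pos: "\<And>q. \<Psi> q > 0" and l: "l \<ge> 1"
  shows "negligible ((approx_set k \<Psi> :: (real^'m^'n) set) - approx_set k (\<lambda>q. \<Psi> q / real l))"
proof -
  define \<Psi>l where "\<Psi>l = (\<lambda>q. \<Psi> q / real l)"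
  define A where "A = (approx_set k \<Psi> :: (real^'m^'n) set)"
  define Al where "Al = (approx_set k \<Psi>l :: (real^'m^'n) set)"
  define C where "C N = {X::real^'m^'n. \<forall>p q. q \<noteq> 0 \<and> coprime_cond k p q \<and> approx_ineq \<Psi>l X p q \<longrightarrow> nq q \<le> real N}" for N :: nat
  define EN where "EN N = (A - Al) \<inter> C N" for N
  have lp: "real l > 0" using l by simp
  have union: "A - Al = (\<Union>N. EN N)"
  proof
    show "A - Al \<subseteq> (\<Union>N. EN N)"
    proof
      fix X assume X: "X \<in> A - Al"
      then have Xc: "X \<in> unit_cube" unfolding A_def approx_set_def by auto
      have "\<not> (\<forall>B::nat. \<exists>p q. (q \<noteq> 0 \<and> coprime_cond k p q) \<and> approx_ineq \<Psi>l X p q \<and> nq q > real B)"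
        using X Xc unfolding Al_def approx_set_alt[of k \<Psi>l] by auto
      then obtain N :: nat where "\<forall>p q. (q \<noteq> 0 \<and> coprime_cond k p q) \<and> approx_ineq \<Psi>l X p q \<longrightarrow> \<not> nq q > real N"
        by blast
      then have "X \<in> C N" unfolding C_def by (auto simp: not_less)
      then show "X \<in> (\<Union>N. EN N)" using X unfolding EN_def by blast
    qed
  qed (auto simp: EN_def)
  have Cclosed: "closed (C N)" for N
  proof -
    have "C N = - (\<Union>g\<in>{g. snd g \<noteq> 0 \<and> coprime_cond k (fst g) (snd g) \<and> nq (snd g) > real N}.
       {X::real^'m^'n. approx_ineq \<Psi>l X (fst g) (snd g)})"
      unfolding C_def by (auto simp: not_le; meson not_le)
    moreover have "open (\<Union>g\<in>{g. snd g \<noteq> 0 \<and> coprime_cond k (fst g) (snd g) \<and> nq (snd g) > real N}.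
       {X::real^'m^'n. approx_ineq \<Psi>l X (fst g) (snd g)})"
      by (intro open_UN ballI open_ineq)
    ultimately show ?thesis by (simp add: closed_def)
  qed
  have ENm: "EN N \<in> lmeasurable" for N
  proof -
    have "EN N \<in> sets lebesgue" unfolding EN_def A_def Al_def
      using approx_set_meas closed_lebesgue[OF Cclosed] by blast
    moreover have "EN N \<subseteq> unit_cube" unfolding EN_def A_def approx_set_def by auto
    then have "bounded (EN N)" using bounded_cube bounded_subset by blast
    ultimately show ?thesis using bounded_set_imp_lmeasurable by blast
  qed
  define \<kappa> where "\<kappa> = (1 / real l) / (real CARD('n) * (real CARD('m) + 1))"
  have \<kappa>: "\<kappa> > 0" unfolding \<kappa>_def using lp by simp
  have negN: "negligible (EN N)" for N
  proof (rule dens[OF ENm \<kappa>])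
    fix x r assume x: "x \<in> EN N" and r: "0 < (r::real)"
    have xA: "x \<in> A" and xAl: "x \<notin> Al" and xC: "x \<in> C N" using x unfolding EN_def by auto
    have xc: "x \<in> unit_cube" using xA unfolding A_def approx_set_def by auto
    define \<delta> where "\<delta> = r / (real CARD('m) + 1)"
    have \<delta>: "\<delta> > 0" unfolding \<delta>_def using r by simp
    have "\<exists>p q. q \<noteq> 0 \<and> coprime_cond k p q \<and> approx_ineq \<Psi> x p q \<and> nq q > real N \<and> \<Psi> q < \<delta> * nq q"
    proof (rule ccontr)
      assume nex: "\<not> ?thesis"
      have H: "\<exists>p q. q \<noteq> 0 \<and> coprime_cond k p q \<and> approx_ineq \<Psi> x p q \<and> nq q > real B \<and> \<Psi> q \<ge> \<delta> * nq q" for B :: nat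
      proof -
        have "\<forall>B::nat. \<exists>p q. (q \<noteq> 0 \<and> coprime_cond k p q) \<and> approx_ineq \<Psi> x p q \<and> nq q > real B"
          using xA unfolding A_def approx_set_alt[of k \<Psi>] by blast
        then obtain p q where pq: "q \<noteq> 0" "coprime_cond k p q" "approx_ineq \<Psi> x p q" "nq q > real (max B N)"
          by blast
        have "nq q > real N" "nq q > real B" using pq(4) by auto
        then have "\<Psi> q \<ge> \<delta> * nq q" using nex pq by (meson not_le)
        then show ?thesis using pq \<open>nq q > real B\<close> by blast
      qed
      have "\<forall>B::nat. \<exists>p q. (q \<noteq> 0 \<and> coprime_cond k p q) \<and> approx_ineq \<Psi>l x p q \<and> nq q > real B"
        unfolding \<Psi>l_def using caseB[OF \<delta> l H] by blast
      then have "x \<in> Al" unfolding Al_def approx_set_alt[of k \<Psi>l] using xc by blast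
      then show False using xAl by blast
    qed
    then obtain p q where pq: "q \<noteq> 0" "coprime_cond k p q" "approx_ineq \<Psi> x p q" "nq q > real N" "\<Psi> q < \<delta> * nq q"
      by blast
    have e: "0 < 1 / real l" "1 / real l \<le> 1" using l lp by auto
    have \<Phi>: "\<Psi>l q = (1 / real l) * \<Psi> q" unfolding \<Psi>l_def by simp
    obtain y where y: "ball y ((1 / real l) * \<Psi> q / (real CARD('n) * nq q)) \<subseteq> ball x ((real CARD('m) + 1) * \<Psi> q / nq q)"
        "\<forall>Y \<in> ball y ((1 / real l) * \<Psi> q / (real CARD('n) * nq q)). approx_ineq \<Psi>l Y p q"
      using geom[where \<Psi>=\<Psi> and \<Phi>=\<Psi>l and e="1 / real l", OF pq(1) pq(3) e \<Phi>] by blast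
    define d where "d = (real CARD('m) + 1) * \<Psi> q / nq q"
    define s where "s = (1 / real l) * \<Psi> q / (real CARD('n) * nq q)"
    have nqp: "nq q > 0" using nq_pos[OF pq(1)] .
    have d0: "0 < d" unfolding d_def using pos[of q] nqp by simp
    have dr: "d < r"
    proof -
      have "\<Psi> q / nq q < \<delta>" using pq(5) nqp by (simp add: field_simps)
      then have "(real CARD('m) + 1) * (\<Psi> q / nq q) < (real CARD('m) + 1) * \<delta>"
        by (intro mult_strict_left_mono) auto
      then show ?thesis unfolding d_def \<delta>_def by simp
    qed
    have ks: "\<kappa> * d \<le> s" unfolding \<kappa>_def d_def s_def
      using aux_ratio[of "real CARD('m) + 1" "real CARD('n)" "nq q" "real l" "\<Psi> q"] nqp lp by simp
    have disj: "ball y s \<inter> EN N = {}"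
    proof (rule ccontr)
      assume "ball y s \<inter> EN N \<noteq> {}"
      then obtain Y where Y: "Y \<in> ball y s" "Y \<in> EN N" by blast
      have "approx_ineq \<Psi>l Y p q" using y(2) Y(1) unfolding s_def by blast
      then have "nq q \<le> real N" using Y(2) pq(1,2) unfolding EN_def C_def by blast
      then show False using pq(4) by simp
    qed
    show "\<exists>d y s. 0 < d \<and> d < r \<and> \<kappa> * d \<le> s \<and> ball y s \<subseteq> ball x d \<and> ball y s \<inter> EN N = {}"
      using d0 dr ks y(1) disj unfolding d_def s_def by blast
  qed
  have "negligible (\<Union>(range EN))" by (rule negligible_countable_Union) (auto simp: negN)
  then show ?thesis using union unfolding A_def Al_def \<Psi>l_def by simp
qed

theorem theorem3:
  fixes \<Psi> :: "int^'n \<Rightarrow> real" and k :: approx_kind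
  assumes "\<And>q. \<Psi> q > 0"
  shows "emeasure lebesgue (\<Inter>l\<in>{1::nat..}. (approx_set k (\<lambda>q. \<Psi> q / real l) :: (real^'m^'n) set))
       = emeasure lebesgue (approx_set k \<Psi> :: (real^'m^'n) set)"
proof -
  define A where "A = (approx_set k \<Psi> :: (real^'m^'n) set)"
  define W where "W = (\<Inter>l\<in>{1::nat..}. (approx_set k (\<lambda>q. \<Psi> q / real l) :: (real^'m^'n) set))"
  have "W \<subseteq> approx_set k (\<lambda>q. \<Psi> q / real (1::nat))" unfolding W_def by (rule INT_lower) simp
  moreover have "(\<lambda>q. \<Psi> q / real (1::nat)) = \<Psi>" by simp
  ultimately have WA: "W \<subseteq> A" unfolding A_def by simp
  have "A - W \<subseteq> (\<Union>l\<in>{1::nat..}. A - approx_set k (\<lambda>q. \<Psi> q / real l))"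
  proof
    fix X assume X: "X \<in> A - W"
    then obtain l :: nat where "l \<in> {1..}" "X \<notin> approx_set k (\<lambda>q. \<Psi> q / real l)"
      unfolding W_def by blast
    then show "X \<in> (\<Union>l\<in>{1::nat..}. A - approx_set k (\<lambda>q. \<Psi> q / real l))" using X by blast
  qed
  moreover have "negligible (\<Union>l\<in>{1::nat..}. A - approx_set k (\<lambda>q. \<Psi> q / real l))"
  proof (rule negligible_countable_Union)
    show "countable ((\<lambda>l. A - approx_set k (\<lambda>q. \<Psi> q / real l)) ` {1::nat..})" by (rule countable_image) simp
  next
    fix S assume "S \<in> (\<lambda>l. A - approx_set k (\<lambda>q. \<Psi> q / real l)) ` {1::nat..}"
    then obtain l :: nat where l: "l \<ge> 1" "S = A - approx_set k (\<lambda>q. \<Psi> q / real l)" by auto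
    show "negligible S" unfolding l(2) A_def by (rule key[OF assms l(1)])
  qed
  ultimately have "negligible (A - W)" using negligible_subset by blast
  then have null: "A - W \<in> null_sets lebesgue" by (simp add: negligible_iff_null_sets)
  have Am: "A \<in> sets lebesgue" unfolding A_def by (rule approx_set_meas)
  have "emeasure lebesgue (A - (A - W)) = emeasure lebesgue A" by (rule emeasure_Diff_null_set[OF null Am])
  moreover have "A - (A - W) = W" using WA by blast
  ultimately show ?thesis unfolding A_def W_def by simp
qed

end
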